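(* Let $X$ and $Y$ be pre-ordered Banach spaces with closed cones, and suppose $Y$ is $\alpha$-normal for some $\alpha>0$. If the operator norm on $B(X,Y)$ is positively attained, then $B(X,Y)$ is $\alpha$-normal.
   Context: A pre-ordered Banach space is a real Banach space $X$ with a cone $X_+$ (a subset with $X_++X_+\subseteq X_+$, $\lambda X_+\subseteq X_+$ for $\lambda\ge0$); $x\ge y$ means $x-y\in X_+$. $B(X,Y)$ is the space of bounded linear operators with the operator norm, pre-ordered by the cone $B(X,Y)_+=\{T: TX_+\subseteq Y_+\}$. A pre-ordered Banach space $Z$ is $\alpha$-normal if $0\le x\le y$ implies $\|x\|\le\alpha\|y\|$. For $T\in B(X,Y)$ put $\|T\|_+=\sup\{\|Tx\|: x\in X_+,\ \|x\|=1\}$; the operator norm on $B(X,Y)$ is positively attained if $\|T\|=\|T\|_+$ for all $T\in B(X,Y)_+$. *)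

theory Defs
  imports "HOL-Analysis.Analysis"
begin

definition is_cone :: "'a::real_vector set \<Rightarrow> bool" where
  "is_cone C \<longleftrightarrow> (\<forall>x\<in>C. \<forall>y\<in>C. x + y \<in> C) \<and> (\<forall>x\<in>C. \<forall>c::real. c \<ge> 0 \<longrightarrow> c *\<^sub>R x \<in> C)"

text \<open>alpha-normality of a pre-ordered normed space with cone C:
  0 \<le> x \<le> y (i.e. x in C and y - x in C) implies norm x \<le> alpha * norm y.\<close>
definition alpha_normal :: "'a::real_normed_vector set \<Rightarrow> real \<Rightarrow> bool" where
  "alpha_normal C \<alpha> \<longleftrightarrow> (\<forall>x y. x \<in> C \<and> y - x \<in> C \<longrightarrow> norm x \<le> \<alpha> * norm y)"

definition op_cone :: "'a::real_normed_vector set \<Rightarrow> 'b::real_normed_vector set \<Rightarrow> ('a \<Rightarrow>\<^sub>L 'b) set" where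
  "op_cone CX CY = {T. blinfun_apply T ` CX \<subseteq> CY}"

definition pos_norm :: "'a::real_normed_vector set \<Rightarrow> ('a \<Rightarrow>\<^sub>L 'b::real_normed_vector) \<Rightarrow> real" where
  "pos_norm CX T = (if {x \<in> CX. norm x = 1} = {} then 0
      else (SUP x\<in>{x \<in> CX. norm x = 1}. norm (blinfun_apply T x)))"

definition positively_attained :: "'a::real_normed_vector set \<Rightarrow> 'b::real_normed_vector set \<Rightarrow> bool" where
  "positively_attained CX CY \<longleftrightarrow> (\<forall>T \<in> op_cone CX CY. norm T = pos_norm CX T)"

end

theory Submission
  imports Defs
begin

theorem proposition4p5:
  fixes CX :: "'a::banach set" and CY :: "'b::banach set" and \<alpha> :: real
  assumes "is_cone CX" and "closed CX"
    and "is_cone CY" and "closed CY"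
    and "\<alpha> > 0" and "alpha_normal CY \<alpha>"
    and "positively_attained CX CY"
  shows "alpha_normal (op_cone CX CY) \<alpha>"
  unfolding alpha_normal_def
proof (intro allI impI)
  fix S T :: "'a \<Rightarrow>\<^sub>L 'b"
  assume h: "S \<in> op_cone CX CY \<and> T - S \<in> op_cone CX CY"
  have eq: "norm S = pos_norm CX S" using h assms(7) positively_attained_def by blast
  have bnd: "norm (blinfun_apply S x) \<le> \<alpha> * norm T" if x: "x \<in> CX" "norm x = 1" for x
  proof -
    have "blinfun_apply S x \<in> CY" using h x unfolding op_cone_def by auto
    moreover have "blinfun_apply (T - S) x \<in> CY" using h x unfolding op_cone_def by auto
    hence "blinfun_apply T x - blinfun_apply S x \<in> CY" by (simp add: blinfun.diff_left)
    ultimately have "norm (blinfun_apply S x) \<le> \<alpha> * norm (blinfun_apply T x)"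
      using assms(6) unfolding alpha_normal_def by blast
    also have "\<dots> \<le> \<alpha> * norm T"
      using norm_blinfun[of T x] x assms(5) by (intro mult_left_mono) auto
    finally show ?thesis .
  qed
  show "norm S \<le> \<alpha> * norm T"
  proof (cases "{x \<in> CX. norm x = 1} = {}")
    case True
    then show ?thesis using eq assms(5) by (simp add: pos_norm_def)
  next
    case False
    then have "pos_norm CX S = (SUP x\<in>{x \<in> CX. norm x = 1}. norm (blinfun_apply S x))"
      unfolding pos_norm_def by (simp only: if_False)
    also have "\<dots> \<le> \<alpha> * norm T"
      using False bnd by (intro cSUP_least) auto
    finally show ?thesis using eq by simp
  qed
qed

end
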